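(* Let $U=[N]$, let $\ell$ be a positive integer dividing $N$, let $\mathcal{S}=\{S_1,\dots,S_m\}$ be a collection of subsets of $U$ each of size $N/\ell$, and let $\varepsilon>0$. Let $I_{\mathrm{rp}}$ be the $k$-RP instance with $k=\ell$, point set $\mathcal{X}=U\cup\mathcal{S}$ (an element point for each $u\in U$ and a set point for each $S\in\mathcal{S}$), distance $d(u,S)=1$ if $u\in S$ and $d(u,S)=2-\varepsilon$ if $u\notin S$ for $u\in U$, $S\in\mathcal{S}$; $d(u_1,u_2)=2$ for distinct $u_1,u_2\in U$; $d(S_1,S_2)=1$ for distinct set points; and $P$ uniform over the element points $U$. If there exist $\ell$ sets in $\mathcal{S}$ whose union is $U$ (a full covering instance), then there exists a $k$-RP solution for $I_{\mathrm{rp}}$ of cost at most $k\cdot(1+1/e)$.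
   Context: For a finite metric space $(\mathcal{X},d)$, $\mathcal{X}_k$ is the set of multisets of exactly $k$ points of $\mathcal{X}$; for $A,B\in\mathcal{X}_k$, $d_k(A,B)$ is the minimum, over perfect matchings between the elements of $A$ and of $B$ (with multiplicity), of the sum of the distances of matched pairs; $P_k$ is the distribution of $k$ points drawn i.i.d. from $P$. A $k$-RP solution is any $K\in\mathcal{X}_k$, and its cost is $\mathbb{E}_{L\sim P_k}[d_k(K,L)]$. *)

theory Defs
  imports "HOL-Probability.Probability" "HOL-Library.Multiset"
begin

text \<open>Matching distance d_k between multisets A, B of equal size: minimum over perfect
  matchings (= orderings of A and B as lists, paired index-wise) of the sum of distances.\<close>
definition match_dist :: "('a \<Rightarrow> 'a \<Rightarrow> real) \<Rightarrow> 'a multiset \<Rightarrow> 'a multiset \<Rightarrow> real" where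
  "match_dist d A B =
     Min {(\<Sum>i<size A. d (xs ! i) (ys ! i)) | xs ys. mset xs = A \<and> mset ys = B}"

definition Pk :: "'a pmf \<Rightarrow> nat \<Rightarrow> 'a multiset pmf" where
  "Pk P k = map_pmf mset (replicate_pmf k P)"

definition krp_cost :: "('a \<Rightarrow> 'a \<Rightarrow> real) \<Rightarrow> 'a pmf \<Rightarrow> nat \<Rightarrow> 'a multiset \<Rightarrow> real" where
  "krp_cost d P k K = measure_pmf.expectation (Pk P k) (\<lambda>L. match_dist d K L)"

datatype rp_point = Elem nat | SetPt nat

definition rp_points :: "nat \<Rightarrow> nat \<Rightarrow> rp_point set" where
  "rp_points N m = Elem ` {1..N} \<union> SetPt ` {1..m}"

fun rp_dist :: "(nat \<Rightarrow> nat set) \<Rightarrow> real \<Rightarrow> rp_point \<Rightarrow> rp_point \<Rightarrow> real" where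
  "rp_dist S \<epsilon> (Elem u) (SetPt i) = (if u \<in> S i then 1 else 2 - \<epsilon>)"
| "rp_dist S \<epsilon> (SetPt i) (Elem u) = (if u \<in> S i then 1 else 2 - \<epsilon>)"
| "rp_dist S \<epsilon> (Elem u) (Elem v) = (if u = v then 0 else 2)"
| "rp_dist S \<epsilon> (SetPt i) (SetPt j) = (if i = j then 0 else 1)"

end

theory Submission imports Defs begin
lemma prob_all_in:
  "emeasure (measure_pmf (replicate_pmf n p)) {xs. set xs \<subseteq> A} = emeasure (measure_pmf p) A ^ n"
proof (induction n)
  case 0
  then show ?case by (simp add: indicator_def)
next
  case (Suc n)
  have "emeasure (measure_pmf (replicate_pmf (Suc n) p)) {xs. set xs \<subseteq> A}
      = (\<integral>\<^sup>+x. indicator A x * emeasure (measure_pmf (replicate_pmf n p)) {xs. set xs \<subseteq> A} \<partial>measure_pmf p)"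
  proof -
    have "\<And>x. (\<integral>\<^sup>+xs. indicator {xs. set xs \<subseteq> A} (x # xs) \<partial>measure_pmf (replicate_pmf n p))
        = indicator A x * emeasure (measure_pmf (replicate_pmf n p)) {xs. set xs \<subseteq> A}"
    proof -
      fix x
      have "(\<lambda>xs. indicator {xs. set xs \<subseteq> A} (x # xs) :: ennreal) = (\<lambda>xs. indicator A x * indicator {xs. set xs \<subseteq> A} xs)"
        by (auto simp: indicator_def)
      then show "?thesis x" by (simp add: nn_integral_cmult)
    qed
    then show ?thesis by (simp add: emeasure_return)
  qed
  also have "\<dots> = emeasure (measure_pmf p) A * emeasure (measure_pmf (replicate_pmf n p)) {xs. set xs \<subseteq> A}"
    by (subst nn_integral_multc) (auto simp: mult.commute)
  finally show ?case using Suc by simp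
qed

lemma prob_all_in_real:
  "measure_pmf.prob (replicate_pmf n p) {xs. set xs \<subseteq> A} = measure_pmf.prob p A ^ n"
proof -
  have "ennreal (measure_pmf.prob (replicate_pmf n p) {xs. set xs \<subseteq> A}) = ennreal (measure_pmf.prob p A ^ n)"
    using prob_all_in[of n p A] by (simp add: measure_pmf.emeasure_eq_measure ennreal_power)
  then show ?thesis by simp
qed

lemma greedy_match:
  fixes own :: "'a \<Rightarrow> 'b" and c :: "'a \<Rightarrow> 'b \<Rightarrow> real"
  assumes "finite T" "card T = length xs" "\<forall>x\<in>set xs. c x (own x) \<le> 1 \<and> (\<forall>j. c x j \<le> 2)"
  shows "\<exists>ys. distinct ys \<and> set ys = T \<and>
    (\<Sum>i<length xs. c (xs!i) (ys!i)) \<le> 2 * real (length xs) - real (card (T \<inter> own ` set xs))"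
  using assms
proof (induction xs arbitrary: T)
  case Nil
  then show ?case by simp
next
  case (Cons x xs)
  let ?B = "own ` set xs"
  have cB: "card ?B < card T" using Cons.prems(2) card_image_le[of "set xs" own] card_length[of xs] by simp
  have ne: "T - ?B \<noteq> {}"
  proof
    assume "T - ?B = {}"
    then have "T \<subseteq> ?B" by blast
    then have "card T \<le> card ?B" by (simp add: card_mono)
    with cB show False by simp
  qed
  define good where "good = (own x \<in> T \<and> own x \<notin> ?B)"
  define j where "j = (if good then own x else (SOME j. j \<in> T - ?B))"
  have j: "j \<in> T" "j \<notin> ?B"
    using ne some_in_eq[of "T - ?B"] unfolding j_def good_def by (auto split: if_splits)
  have cT: "card (T - {j}) = length xs" using Cons.prems j by simp
  obtain ys where ys: "distinct ys" "set ys = T - {j}"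
    "(\<Sum>i<length xs. c (xs!i) (ys!i)) \<le> 2 * real (length xs) - real (card ((T - {j}) \<inter> ?B))"
    using Cons.IH[of "T - {j}"] Cons.prems cT by auto
  have e1: "(T - {j}) \<inter> ?B = T \<inter> ?B" using j by blast
  have fin: "finite (T \<inter> ?B)" using Cons.prems by simp
  have e2: "real (card (T \<inter> own ` set (x # xs))) = real (card (T \<inter> ?B)) + (if good then 1 else 0)"
  proof (cases good)
    case True
    then have "T \<inter> own ` set (x # xs) = insert (own x) (T \<inter> ?B)" unfolding good_def by auto
    then show ?thesis using True fin unfolding good_def by simp
  next
    case False
    then have "T \<inter> own ` set (x # xs) = T \<inter> ?B" unfolding good_def by auto
    then show ?thesis using False by simp
  qed
  have cx: "c x j \<le> (if good then 1 else 2)" using Cons.prems(3) unfolding j_def by auto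
  have s: "(\<Sum>i<length (x#xs). c ((x#xs)!i) ((j#ys)!i)) = c x j + (\<Sum>i<length xs. c (xs!i) (ys!i))"
    by (simp del: sum.lessThan_Suc add: sum.lessThan_Suc_shift)
  have le: "c x j + (\<Sum>i<length xs. c (xs!i) (ys!i)) \<le> 2 * real (length (x#xs)) - real (card (T \<inter> own ` set (x#xs)))"
    using ys(3) e1 e2 cx by (cases good) auto
  show ?case
  proof (intro exI conjI)
    show "distinct (j#ys)" using ys j by simp
    show "set (j#ys) = T" using ys j by auto
    show "(\<Sum>i<length (x#xs). c ((x#xs)!i) ((j#ys)!i)) \<le> 2 * real (length (x#xs)) - real (card (T \<inter> own ` set (x#xs)))"
      using s le by simp
  qed
qed

lemma finite_msets_lists: "finite {xs. mset xs = M}"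
proof -
  have "{xs. mset xs = M} \<subseteq> {xs. set xs \<subseteq> set_mset M \<and> length xs = size M}" by auto
  then show ?thesis using finite_lists_length_eq[of "set_mset M" "size M"] finite_subset by blast
qed

lemma match_dist_le:
  assumes "mset xs = A" "mset ys = B"
  shows "match_dist d A B \<le> (\<Sum>i<size A. d (xs ! i) (ys ! i))"
proof -
  have "finite {(\<Sum>i<size A. d (xs ! i) (ys ! i)) | xs ys. mset xs = A \<and> mset ys = B}"
  proof -
    have "{(\<Sum>i<size A. d (xs ! i) (ys ! i)) | xs ys. mset xs = A \<and> mset ys = B}
       = (\<lambda>(xs,ys). (\<Sum>i<size A. d (xs ! i) (ys ! i))) ` ({xs. mset xs = A} \<times> {ys. mset ys = B})"
      by auto
    then show ?thesis by (simp only:) (intro finite_imageI finite_cartesian_product finite_msets_lists)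
  qed
  then show ?thesis unfolding match_dist_def using assms by (intro Min_le) auto
qed

theorem lemma3:
  fixes N l m :: nat and S :: "nat \<Rightarrow> nat set" and \<epsilon> :: real
  assumes "N > 0" and "l > 0" and "l dvd N"
    and "\<forall>i\<in>{1..m}. S i \<subseteq> {1..N} \<and> card (S i) = N div l"
    and "\<epsilon> > 0"
    and "\<exists>J. J \<subseteq> {1..m} \<and> card J = l \<and> (\<Union>i\<in>J. S i) = {1..N}"
  shows "\<exists>K. size K = l \<and> set_mset K \<subseteq> rp_points N m \<and>
           krp_cost (rp_dist S \<epsilon>) (pmf_of_set (Elem ` {1..N})) l K
             \<le> real l * (1 + 1 / exp 1)"
proof -
  obtain J where J: "J \<subseteq> {1..m}" "card J = l" "(\<Union>i\<in>J. S i) = {1..N}" using assms(6) by blast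
  have finJ: "finite J" using J(1) finite_subset by blast
  define E where "E = Elem ` {1..N}"
  define own where "own x = (case x of Elem u \<Rightarrow> (SOME j. j \<in> J \<and> u \<in> S j) | SetPt i \<Rightarrow> 0)" for x
  have own: "own x \<in> J \<and> (\<exists>u. x = Elem u \<and> u \<in> S (own x))" if "x \<in> E" for x
  proof -
    from that obtain u where u: "x = Elem u" "u \<in> {1..N}" unfolding E_def by auto
    then have "\<exists>j. j \<in> J \<and> u \<in> S j" using J(3) by blast
    then have "(SOME j. j \<in> J \<and> u \<in> S j) \<in> J \<and> u \<in> S (SOME j. j \<in> J \<and> u \<in> S j)" by (rule someI_ex)
    then have "own x \<in> J \<and> u \<in> S (own x)" unfolding own_def u by simp
    then show ?thesis using u by auto
  qed
  define K where "K = image_mset SetPt (mset_set J)"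
  have sizeK: "size K = l" using J by (simp add: K_def)
  have setK: "set_mset K \<subseteq> rp_points N m" using J(1) finJ unfolding K_def rp_points_def by auto
  define P where "P = pmf_of_set E"
  have finE: "finite E" "E \<noteq> {}" using assms(1) E_def by auto
  have setP: "set_pmf P = E" using finE P_def by simp
  define Q where "Q = replicate_pmf l P"
  have setQ: "set_pmf Q = {xs. set xs \<subseteq> E \<and> length xs = l}" by (auto simp: Q_def set_replicate_pmf setP)
  have finQ: "finite (set_pmf Q)" unfolding setQ using finite_lists_length_eq[OF finE(1), of l] by simp
  define f where "f xs = 2 * real l - (\<Sum>j\<in>J. indicator {xs. j \<in> own ` set xs} xs :: real)" for xs :: "rp_point list"
  have pw: "match_dist (rp_dist S \<epsilon>) K (mset xs) \<le> f xs" if "xs \<in> set_pmf Q" for xs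
  proof -
    from that have xs: "set xs \<subseteq> E" "length xs = l" using setQ by auto
    have hc: "\<forall>x\<in>set xs. rp_dist S \<epsilon> (SetPt (own x)) x \<le> 1 \<and> (\<forall>j. rp_dist S \<epsilon> (SetPt j) x \<le> 2)"
    proof
      fix x assume "x \<in> set xs"
      then have "x \<in> E" using xs by auto
      then obtain u where u: "x = Elem u" "u \<in> S (own x)" using own by blast
      then show "rp_dist S \<epsilon> (SetPt (own x)) x \<le> 1 \<and> (\<forall>j. rp_dist S \<epsilon> (SetPt j) x \<le> 2)"
        using assms(5) by auto
    qed
    obtain ys where ys: "distinct ys" "set ys = J"
      "(\<Sum>i<length xs. rp_dist S \<epsilon> (SetPt (ys!i)) (xs!i)) \<le> 2 * real (length xs) - real (card (J \<inter> own ` set xs))"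
      using greedy_match[of J xs "\<lambda>x j. rp_dist S \<epsilon> (SetPt j) x" own] finJ J(2) xs hc by auto
    have ly: "length ys = l" using ys J(2) distinct_card by fastforce
    have "mset ys = mset_set J" using mset_set_set[OF ys(1)] ys(2) by simp
    then have mK: "mset (map SetPt ys) = K" by (simp add: K_def)
    have "match_dist (rp_dist S \<epsilon>) K (mset xs) \<le> (\<Sum>i<size K. rp_dist S \<epsilon> ((map SetPt ys)!i) (xs!i))"
      by (rule match_dist_le[OF mK]) simp
    also have "\<dots> = (\<Sum>i<length xs. rp_dist S \<epsilon> (SetPt (ys!i)) (xs!i))"
      using sizeK xs ly by (intro sum.cong) auto
    also have "\<dots> \<le> 2 * real (length xs) - real (card (J \<inter> own ` set xs))" by (rule ys(3))
    also have "real (card (J \<inter> own ` set xs)) = (\<Sum>j\<in>J. indicator {xs. j \<in> own ` set xs} xs :: real)"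
    proof -
      have "(\<Sum>j\<in>J. indicator {xs. j \<in> own ` set xs} xs :: real) = (\<Sum>j\<in>J. indicator (own ` set xs) j)"
        by (simp add: indicator_def)
      also have "\<dots> = real (card (J \<inter> own ` set xs))"
        using finJ by (simp add: indicator_def sum.If_cases)
      finally show ?thesis by simp
    qed
    finally show ?thesis unfolding f_def using xs by simp
  qed
  have cost: "krp_cost (rp_dist S \<epsilon>) (pmf_of_set (Elem ` {1..N})) l K
      = measure_pmf.expectation Q (\<lambda>xs. match_dist (rp_dist S \<epsilon>) K (mset xs))"
    unfolding krp_cost_def Pk_def Q_def P_def E_def by simp
  have intQ: "integrable (measure_pmf Q) g" for g :: "rp_point list \<Rightarrow> real"
    by (rule integrable_measure_pmf_finite[OF finQ])
  have step1: "measure_pmf.expectation Q (\<lambda>xs. match_dist (rp_dist S \<epsilon>) K (mset xs))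
      \<le> measure_pmf.expectation Q f"
    by (rule integral_mono_AE[OF intQ intQ]) (simp add: AE_measure_pmf_iff pw)
  have step2: "measure_pmf.expectation Q f = 2 * real l - (\<Sum>j\<in>J. measure_pmf.prob Q {xs. j \<in> own ` set xs})"
    unfolding f_def by (simp add: intQ)
  define C where "C j = E \<inter> {x. own x = j}" for j
  have Cle: "card (C j) \<le> N div l" if "j \<in> J" for j
  proof -
    have Sj: "S j \<subseteq> {1..N}" "card (S j) = N div l" using assms(4) J(1) that by auto
    have "C j \<subseteq> Elem ` S j" unfolding C_def using own by fastforce
    then have "card (C j) \<le> card (Elem ` S j)"
      by (intro card_mono finite_imageI) (use Sj finite_subset[of "S j" "{1..N}"] in auto)
    also have "\<dots> = N div l" using Sj by (simp add: card_image inj_on_def)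
    finally show ?thesis .
  qed
  have finC: "finite (C j)" for j unfolding C_def using finE by simp
  have UC: "(\<Union>j\<in>J. C j) = E" unfolding C_def using own by auto
  have "card E = (\<Sum>j\<in>J. card (C j))"
    unfolding UC[symmetric] by (rule card_UN_disjoint) (use finJ finC C_def in auto)
  moreover have "card E = N" unfolding E_def by (simp add: card_image inj_on_def)
  moreover have "(\<Sum>j\<in>J. N div l) = N" using J(2) assms(3) by simp
  ultimately have sumC: "(\<Sum>j\<in>J. card (C j)) = (\<Sum>j\<in>J. N div l)" by simp
  have Ceq: "card (C j) = N div l" if "j \<in> J" for j
  proof (rule ccontr)
    assume "card (C j) \<noteq> N div l"
    then have "card (C j) < N div l" using Cle[OF that] by simp
    then have "(\<Sum>j\<in>J. card (C j)) < (\<Sum>j\<in>J. N div l)"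
      using that Cle finJ by (intro sum_strict_mono_ex1) auto
    with sumC show False by simp
  qed
  have probP: "measure_pmf.prob P {x. own x = j} = 1 / real l" if "j \<in> J" for j
  proof -
    have "measure_pmf.prob P {x. own x = j} = real (card (C j)) / real (card E)"
      unfolding P_def C_def using finE by (simp add: measure_pmf_of_set)
    also have "\<dots> = real (N div l) / real N" using Ceq[OF that] \<open>card E = N\<close> by simp
    also have "\<dots> = 1 / real l" using assms(1-3) by (simp add: real_of_nat_div)
    finally show ?thesis .
  qed
  have probQ: "measure_pmf.prob Q {xs. j \<in> own ` set xs} = 1 - (1 - 1 / real l) ^ l" if "j \<in> J" for j
  proof -
    have e1: "{xs. j \<in> own ` set xs} = UNIV - {xs. set xs \<subseteq> {x. own x \<noteq> j}}" by auto
    have e2: "{x. own x \<noteq> j} = UNIV - {x. own x = j}" by auto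
    have "measure_pmf.prob Q {xs. j \<in> own ` set xs} = 1 - measure_pmf.prob Q {xs. set xs \<subseteq> {x. own x \<noteq> j}}"
      unfolding e1 using measure_pmf.prob_compl[of "{xs. set xs \<subseteq> {x. own x \<noteq> j}}" Q] by simp
    also have "\<dots> = 1 - (measure_pmf.prob P {x. own x \<noteq> j}) ^ l"
      unfolding Q_def by (simp add: prob_all_in_real)
    also have "measure_pmf.prob P {x. own x \<noteq> j} = 1 - 1 / real l"
      unfolding e2 using measure_pmf.prob_compl[of "{x. own x = j}" P] probP[OF that] by simp
    finally show ?thesis .
  qed
  have "krp_cost (rp_dist S \<epsilon>) (pmf_of_set (Elem ` {1..N})) l K
      \<le> 2 * real l - (\<Sum>j\<in>J. 1 - (1 - 1 / real l) ^ l)"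
    using cost step1 step2 probQ by simp
  also have "\<dots> = real l + real l * (1 - 1 / real l) ^ l" using J(2) by (simp add: algebra_simps)
  also have "\<dots> \<le> real l + real l * exp (-1)"
    using exp_ge_one_minus_x_over_n_power_n[of 1 l] assms(2) by simp
  also have "\<dots> = real l * (1 + 1 / exp 1)" by (simp add: exp_minus field_simps)
  finally show ?thesis using sizeK setK by blast
qed

end
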